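(* Let $(\mathcal Q,d)$ be a Hadamard space, $Y$ a $\mathcal Q$-valued random variable and $o\in\mathcal Q$. Let $m\in\arg\min_{q\in\mathcal Q}\mathbb E[d(Y,q)-d(Y,o)]$ (a Fréchet median), let $q\in\mathcal Q\setminus\{m\}$ and let $\eta\in[0,1]$. Then $$\mathbb E\big[d(Y,q)-d(Y,m)\big]\ \ge\ \tfrac12\,\eta^2\, d(q,m)^2\,\mathbb E\Big[\max\big(d(Y,m),d(Y,q)\big)^{-1}\,\mathbf 1_{A(m,q,\eta)}(Y)\Big].$$
   Context: A Hadamard space is a complete metric space $(\mathcal Q,d)$ such that for all $y_0,y_1\in\mathcal Q$ there is $m\in\mathcal Q$ with $\frac12 d(y_0,q)^2+\frac12 d(y_1,q)^2-\frac14 d(y_0,y_1)^2\ge d(q,m)^2$ for all $q\in\mathcal Q$ (complete CAT(0) space). For $p\ne q$ in a Hadamard space, $\gamma_{p\to q}:[0,d(p,q)]\to\mathcal Q$ denotes the unique unit-speed geodesic from $p$ to $q$ (i.e. $d(\gamma(s),\gamma(t))=|s-t|$). For a real function $g$, $g^{\oplus}$, $g^{\ominus}$ denote right and left derivatives. For $y\in\mathcal Q$ write $f_y(t):=d(y,\gamma_{p\to q}(t))$. The "bowtie complement" is $$A(p,q,\eta):=\Big\{y\in\mathcal Q:\ \max\big(f_y^{\oplus}(0)^2,\ f_y^{\ominus}(d(q,p))^2\big)\le 1-\eta^2\Big\}.$$ *)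

theory Defs
  imports "HOL-Probability.Probability"
begin

text \<open>Hadamard space: complete metric space with the midpoint (CAT(0)) inequality.\<close>
definition hadamard :: "'a::complete_space itself \<Rightarrow> bool" where
  "hadamard _ \<longleftrightarrow>
     (\<forall>y0 y1::'a. \<exists>m::'a. \<forall>q::'a.
        (1/2) * (dist y0 q)^2 + (1/2) * (dist y1 q)^2 - (1/4) * (dist y0 y1)^2 \<ge> (dist q m)^2)"

definition unit_geodesic :: "'a::metric_space \<Rightarrow> 'a \<Rightarrow> (real \<Rightarrow> 'a) \<Rightarrow> bool" where
  "unit_geodesic p q \<gamma> \<longleftrightarrow> \<gamma> 0 = p \<and> \<gamma> (dist p q) = q \<and>
     (\<forall>s\<in>{0..dist p q}. \<forall>t\<in>{0..dist p q}. dist (\<gamma> s) (\<gamma> t) = \<bar>s - t\<bar>)"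

definition geod :: "'a::metric_space \<Rightarrow> 'a \<Rightarrow> real \<Rightarrow> 'a" where
  "geod p q = (SOME \<gamma>. unit_geodesic p q \<gamma>)"

definition right_deriv :: "(real \<Rightarrow> real) \<Rightarrow> real \<Rightarrow> real" where
  "right_deriv g t = Lim (at_right t) (\<lambda>s. (g s - g t) / (s - t))"

definition left_deriv :: "(real \<Rightarrow> real) \<Rightarrow> real \<Rightarrow> real" where
  "left_deriv g t = Lim (at_left t) (\<lambda>s. (g s - g t) / (s - t))"

definition dist_along :: "'a::metric_space \<Rightarrow> 'a \<Rightarrow> 'a \<Rightarrow> real \<Rightarrow> real" where
  "dist_along p q y t = dist y (geod p q t)"

definition bowtie_compl :: "'a::metric_space \<Rightarrow> 'a \<Rightarrow> real \<Rightarrow> 'a set" where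
  "bowtie_compl p q \<eta> = {y. max ((right_deriv (dist_along p q y) 0)^2)
                                 ((left_deriv (dist_along p q y) (dist q p))^2) \<le> 1 - \<eta>^2}"

end

theory Submission
  imports Defs
begin

lemma had_mid:
  assumes "hadamard TYPE('a::complete_space)"
  shows "\<exists>w::'a. \<forall>z. (dist z w)^2 \<le> (1/2)*(dist x z)^2 + (1/2)*(dist y z)^2 - (1/4)*(dist x y)^2"
  using assms unfolding hadamard_def by blast

lemma sq_le_half:
  fixes d L :: real
  assumes "d^2 \<le> (1/2)*0 + (1/2)*L^2 - (1/4)*L^2" "d \<ge> 0" "L \<ge> 0"
  shows "d \<le> L/2"
proof -
  have e: "(1/2)*0 + (1/2)*L^2 - (1/4)*L^2 = (L/2)^2" by (simp add: power_divide)
  show ?thesis by (rule power2_le_imp_le) (use assms e in auto)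
qed

lemma mid_exact:
  assumes H: "hadamard TYPE('a::complete_space)"
  shows "\<exists>w::'a. dist p w = dist p q/2 \<and> dist w q = dist p q/2"
proof -
  obtain w::'a where w: "\<forall>z. (dist z w)^2 \<le> (1/2)*(dist p z)^2 + (1/2)*(dist q z)^2 - (1/4)*(dist p q)^2"
    using had_mid[OF H] by blast
  have 1: "(dist p w)^2 \<le> (1/2)*0 + (1/2)*(dist p q)^2 - (1/4)*(dist p q)^2"
    using w[rule_format, of p] by (simp add: dist_commute)
  have 2: "(dist q w)^2 \<le> (1/2)*0 + (1/2)*(dist p q)^2 - (1/4)*(dist p q)^2"
    using w[rule_format, of q] by (simp add: dist_commute)
  have a: "dist p w \<le> dist p q/2" by (rule sq_le_half[OF 1]) auto
  have b: "dist w q \<le> dist p q/2" using sq_le_half[OF 2] by (simp add: dist_commute)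
  have "dist p q \<le> dist p w + dist w q" by (rule dist_triangle)
  with a b have "dist p w = dist p q/2 \<and> dist w q = dist p q/2" by linarith
  then show ?thesis by blast
qed

lemma approx_pts:
  assumes H: "hadamard TYPE('a::complete_space)"
  shows "\<forall>p q::'a. \<forall>t. 0 \<le> t \<and> t \<le> dist p q \<longrightarrow>
     (\<exists>r. dist p r \<le> t + dist p q / 2^n \<and> dist r q \<le> dist p q - t + dist p q / 2^n)"
proof (induction n)
  case 0
  show ?case
  proof (intro allI impI)
    fix p q :: 'a and t assume "0 \<le> t \<and> t \<le> dist p q"
    then show "\<exists>r. dist p r \<le> t + dist p q / 2 ^ 0 \<and> dist r q \<le> dist p q - t + dist p q / 2 ^ 0"
      by (intro exI[of _ p]) simp
  qed
next
  case (Suc n)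
  show ?case
  proof (intro allI impI)
    fix p q :: 'a and t assume t: "0 \<le> t \<and> t \<le> dist p q"
    define L where "L = dist p q"
    obtain w where w: "dist p w = L/2" "dist w q = L/2" using mid_exact[OF H] L_def by blast
    have e: "L / 2 ^ Suc n = (L/2)/2^n" by simp
    show "\<exists>r. dist p r \<le> t + dist p q / 2 ^ Suc n \<and> dist r q \<le> dist p q - t + dist p q / 2 ^ Suc n"
    proof (cases "t \<le> L/2")
      case True
      then obtain r where r: "dist p r \<le> t + (L/2)/2^n" "dist r w \<le> L/2 - t + (L/2)/2^n"
        using Suc.IH[rule_format, of t p w] t w by auto
      have "dist r q \<le> dist r w + dist w q" by (rule dist_triangle)
      then show ?thesis using r w unfolding L_def[symmetric] e by (intro exI[of _ r]) auto
    next
      case False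
      then obtain r where r: "dist w r \<le> t - L/2 + (L/2)/2^n" "dist r q \<le> L/2 - (t - L/2) + (L/2)/2^n"
        using Suc.IH[rule_format, of "t - L/2" w q] t w L_def by auto
      have "dist p r \<le> dist p w + dist w r" by (rule dist_triangle)
      then show ?thesis using r w unfolding L_def[symmetric] e by (intro exI[of _ r]) auto
    qed
  qed
qed

lemma diam_alg:
  fixes A B L t e al be de :: real
  assumes "A = t + e" "B = L - t + e" "0 \<le> t" "t \<le> L" "0 \<le> e" "0 \<le> al" "0 \<le> be"
    "al^2 \<le> A^2 - de^2/4" "be^2 \<le> B^2 - de^2/4" "L \<le> al + be"
  shows "de^2 \<le> 16*e*(L+e)"
proof -
  have "al^2 \<le> A^2" using assms(8) zero_le_power2[of de] by linarith
  hence "al \<le> A" by (rule power2_le_imp_le) (use assms in auto)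
  hence bb: "be \<ge> B - 2*e" using assms by linarith
  show ?thesis
  proof (cases "B \<ge> 2*e")
    case True
    hence "(B - 2*e)^2 \<le> be^2" using bb by (intro power_mono) auto
    moreover have "(B - 2*e)^2 = B^2 - 4*e*B + 4*e^2" by (simp add: power2_eq_square algebra_simps)
    ultimately have "de^2/4 \<le> 4*e*B - 4*e^2" using assms(9) by linarith
    moreover have "4*e*B \<le> 4*e*(L+e)" using assms by (intro mult_left_mono) auto
    moreover have "0 \<le> e^2" by simp
    ultimately show ?thesis by linarith
  next
    case False
    hence "B^2 \<le> (2*e)^2" using assms by (intro power_mono) auto
    hence "B^2 \<le> 4*e^2" by (simp add: power_mult_distrib)
    hence "de^2/4 \<le> 4*e^2" using assms(9) zero_le_power2[of be] by linarith
    moreover have "e*e \<le> e*(L+e)" using assms by (intro mult_left_mono) auto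
    ultimately show ?thesis by (simp add: power2_eq_square)
  qed
qed

lemma diam:
  assumes H: "hadamard TYPE('a::complete_space)"
  assumes "0 \<le> t" "t \<le> dist p q" "0 \<le> e"
    "dist p r \<le> t + e" "dist r q \<le> dist p q - t + e"
    "dist p r' \<le> t + e" "dist r' q \<le> dist p q - t + e"
  shows "(dist r (r'::'a))^2 \<le> 16*e*(dist p q + e)"
proof -
  obtain w::'a where w: "\<forall>z. (dist z w)^2 \<le> (1/2)*(dist r z)^2 + (1/2)*(dist r' z)^2 - (1/4)*(dist r r')^2"
    using had_mid[OF H] by blast
  have p1: "(dist r p)^2 \<le> (t+e)^2" "(dist r' p)^2 \<le> (t+e)^2"
    using assms by (auto intro!: power_mono simp: dist_commute)
  have q1: "(dist r q)^2 \<le> (dist p q - t + e)^2" "(dist r' q)^2 \<le> (dist p q - t + e)^2"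
    using assms by (auto intro!: power_mono simp: dist_commute)
  have a: "(dist p w)^2 \<le> (t+e)^2 - (dist r r')^2/4" using w[rule_format, of p] p1 by linarith
  have b: "(dist w q)^2 \<le> (dist p q - t+e)^2 - (dist r r')^2/4" using w[rule_format, of q] q1
    by (simp add: dist_commute)
  show ?thesis
    by (rule diam_alg[OF refl refl assms(2,3,4) zero_le_dist zero_le_dist a b dist_triangle])
qed


lemma tpt_uniq:
  assumes H: "hadamard TYPE('a::complete_space)"
  assumes "0 \<le> t" "t \<le> dist p q" "dist p r = t" "dist r q = dist p q - t"
    "dist p r' = t" "dist r' q = dist p q - t"
  shows "r = (r'::'a)"
proof -
  have "(dist r r')^2 \<le> 16*0*(dist p q + 0)"
    by (rule diam[OF H, where e=0 and r=r and r'=r' and p=p and q=q and t=t]) (use assms in auto)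
  thus ?thesis by simp
qed

lemma tpt_ex:
  assumes H: "hadamard TYPE('a::complete_space)"
  assumes t: "0 \<le> t" "t \<le> dist p q"
  shows "\<exists>r::'a. dist p r = t \<and> dist r q = dist p q - t"
proof -
  define L where "L = dist p q"
  have "\<forall>n. \<exists>r. dist p r \<le> t + L / 2^n \<and> dist r q \<le> L - t + L / 2^n"
    using approx_pts[OF H] t L_def by blast
  then obtain R where R: "\<And>n. dist p (R n) \<le> t + L / 2^n \<and> dist (R n) q \<le> L - t + L / 2^n"
    unfolding choice_iff by blast
  have L0: "0 \<le> L" using L_def by simp
  have C: "Cauchy R"
  proof (rule metric_CauchyI)
    fix e :: real assume e: "0 < e"
    have "(\<lambda>n. (32*L^2) / 2^n) \<longlonglongrightarrow> 0" by (rule LIMSEQ_divide_realpow_zero) simp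
    from order_tendstoD(2)[OF this, of "e^2"] e
    obtain N where N: "\<And>n. n \<ge> N \<Longrightarrow> (32*L^2) / 2^n < e^2"
      by (auto simp: eventually_sequentially)
    show "\<exists>M. \<forall>m\<ge>M. \<forall>n\<ge>M. dist (R m) (R n) < e"
    proof (intro exI allI impI)
      fix m n assume mn: "N \<le> m" "N \<le> n"
      define ep where "ep = L / 2^N"
      have "L/2^N \<le> L/1" by (rule divide_left_mono) (use L0 in auto)
      hence ep0: "0 \<le> ep" "ep \<le> L" using L0 by (auto simp: ep_def)
      have mono: "L / 2^k \<le> ep" if "N \<le> k" for k
        unfolding ep_def using L0 that by (intro divide_left_mono) (auto intro: power_increasing)
      have "(dist (R m) (R n))^2 \<le> 16*ep*(dist p q + ep)"
        apply (rule diam[OF H t(1) t(2) ep0(1)])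
        using R[of m] R[of n] mono[OF mn(1)] mono[OF mn(2)] unfolding L_def by auto
      also have "\<dots> \<le> 16*ep*(2*L)" using ep0 L_def by (intro mult_left_mono) auto
      also have "\<dots> = (32*L^2)/2^N" by (simp add: ep_def power2_eq_square)
      also have "\<dots> < e^2" using N by simp
      finally have "(dist (R m) (R n))^2 < e^2" .
      thus "dist (R m) (R n) < e" by (rule power_less_imp_less_base) (use e in simp)
    qed
  qed
  then obtain r where r: "R \<longlonglongrightarrow> r" using Cauchy_convergent convergent_def by blast
  have z: "(\<lambda>n. L / 2^n) \<longlonglongrightarrow> 0" by (rule LIMSEQ_divide_realpow_zero) simp
  have "dist p r \<le> t + 0"
    by (rule LIMSEQ_le[OF tendsto_dist[OF tendsto_const r] tendsto_add[OF tendsto_const z]])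
      (use R in auto)
  moreover have "dist r q \<le> L - t + 0"
    by (rule LIMSEQ_le[OF tendsto_dist[OF r tendsto_const] tendsto_add[OF tendsto_const z]])
      (use R in auto)
  moreover have "L \<le> dist p r + dist r q" unfolding L_def by (rule dist_triangle)
  ultimately show ?thesis unfolding L_def by (intro exI[of _ r]) auto
qed

lemma geod_ex:
  assumes H: "hadamard TYPE('a::complete_space)"
  shows "\<exists>\<gamma>. unit_geodesic p (q::'a) \<gamma>"
proof -
  define L where "L = dist p q"
  define G where "G t = (SOME r. dist p r = t \<and> dist r q = L - t)" for t
  have G: "dist p (G t) = t \<and> dist (G t) q = L - t" if "0 \<le> t" "t \<le> L" for t
    unfolding G_def by (rule someI_ex) (use tpt_ex[OF H that(1)] that L_def in auto)
  have key: "dist (G s) (G t) = t - s" if st: "0 \<le> s" "s \<le> t" "t \<le> L" for s t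
  proof -
    have Gt: "dist p (G t) = t" "dist (G t) q = L - t" using G[of t] st by auto
    obtain w where w: "dist p w = s" "dist w (G t) = dist p (G t) - s"
      using tpt_ex[OF H st(1), of p "G t"] st Gt by auto
    have "dist w q \<le> dist w (G t) + dist (G t) q" by (rule dist_triangle)
    moreover have "dist p q \<le> dist p w + dist w q" by (rule dist_triangle)
    ultimately have wq: "dist w q = L - s" using w Gt L_def by auto
    have "w = G s"
      by (rule tpt_uniq[OF H st(1), of p q]) (use w wq G[of s] st L_def in auto)
    thus ?thesis using w Gt by simp
  qed
  have "unit_geodesic p q G"
    unfolding unit_geodesic_def
  proof (intro conjI ballI)
    have L0: "0 \<le> L" using L_def by simp
    have "dist p (G 0) = 0" using G[of 0] L0 by blast
    thus "G 0 = p" by simp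
    have "dist (G L) q = 0" using G[of L] L0 by simp
    thus "G (dist p q) = q" unfolding L_def[symmetric] by simp
    fix s t assume "s \<in> {0..dist p q}" "t \<in> {0..dist p q}"
    hence st: "0 \<le> s" "s \<le> L" "0 \<le> t" "t \<le> L" using L_def by auto
    show "dist (G s) (G t) = \<bar>s - t\<bar>"
    proof (cases "s \<le> t")
      case True
      thus ?thesis using key[of s t] st by simp
    next
      case False
      thus ?thesis using key[of t s] st by (simp add: dist_commute)
    qed
  qed
  thus ?thesis by blast
qed

lemma geod_unit:
  assumes H: "hadamard TYPE('a::complete_space)"
  shows "unit_geodesic p (q::'a) (geod p q)"
proof -
  have "\<exists>\<gamma>. unit_geodesic p q \<gamma>" by (rule geod_ex[OF H])
  thus ?thesis unfolding geod_def by (rule someI_ex)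
qed


lemma ug_dist:
  assumes g: "unit_geodesic p q \<gamma>" and t: "0 \<le> t" "t \<le> dist p q"
  shows "dist p (\<gamma> t) = t" "dist (\<gamma> t) q = dist p q - t"
proof -
  have g0: "\<gamma> 0 = p" "\<gamma> (dist p q) = q"
    and iso: "\<And>s t. s \<in> {0..dist p q} \<Longrightarrow> t \<in> {0..dist p q} \<Longrightarrow> dist (\<gamma> s) (\<gamma> t) = \<bar>s - t\<bar>"
    using g unfolding unit_geodesic_def by auto
  show "dist p (\<gamma> t) = t" using iso[of 0 t] t g0 by simp
  show "dist (\<gamma> t) q = dist p q - t" using iso[of t "dist p q"] t g0 by simp
qed

lemma ug_iso:
  assumes g: "unit_geodesic p q \<gamma>" and "s \<in> {0..dist p q}" "t \<in> {0..dist p q}"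
  shows "dist (\<gamma> s) (\<gamma> t) = \<bar>s - t\<bar>"
  using assms unfolding unit_geodesic_def by blast

lemma ug_cont:
  assumes g: "unit_geodesic p q \<gamma>"
  shows "continuous_on {0..dist p q} \<gamma>"
  unfolding continuous_on_iff
proof (intro ballI allI impI)
  fix x e assume x: "x \<in> {0..dist p q}" and e: "(0::real) < e"
  show "\<exists>d>0. \<forall>x'\<in>{0..dist p q}. dist x' x < d \<longrightarrow> dist (\<gamma> x') (\<gamma> x) < e"
    using ug_iso[OF g _ x] e by (intro exI[of _ e]) (auto simp: dist_real_def)
qed

lemma half_abs:
  fixes x z :: real
  shows "\<bar>x - (x+z)/2\<bar> = \<bar>z-x\<bar>/2" "\<bar>z - (x+z)/2\<bar> = \<bar>z-x\<bar>/2"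
proof -
  have e1: "x - (x+z)/2 = -((z-x)/2)" by (simp add: field_simps)
  have e2: "z - (x+z)/2 = (z-x)/2" by (simp add: field_simps)
  show "\<bar>x - (x+z)/2\<bar> = \<bar>z-x\<bar>/2" by (simp only: e1 abs_minus_cancel abs_divide)
  show "\<bar>z - (x+z)/2\<bar> = \<bar>z-x\<bar>/2" by (simp only: e2 abs_divide)
qed

lemma ug_mid:
  assumes H: "hadamard TYPE('a::complete_space)"
  assumes g: "unit_geodesic p (q::'a) \<gamma>" and x: "x \<in> {0..dist p q}" and z: "z \<in> {0..dist p q}"
  shows "(dist y (\<gamma> ((x+z)/2)))^2 \<le> (1/2)*(dist y (\<gamma> x))^2 + (1/2)*(dist y (\<gamma> z))^2 - (1/4)*(z-x)^2"
proof -
  obtain w::'a where w: "\<forall>y. (dist y w)^2 \<le> (1/2)*(dist (\<gamma> x) y)^2 + (1/2)*(dist (\<gamma> z) y)^2 - (1/4)*(dist (\<gamma> x) (\<gamma> z))^2"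
    using had_mid[OF H] by blast
  have m: "(x+z)/2 \<in> {0..dist p q}" using x z by auto
  have d1: "dist (\<gamma> x) (\<gamma> ((x+z)/2)) = \<bar>z-x\<bar>/2" by (subst ug_iso[OF g x m]) (rule half_abs)
  have d2: "dist (\<gamma> z) (\<gamma> ((x+z)/2)) = \<bar>z-x\<bar>/2" by (subst ug_iso[OF g z m]) (rule half_abs)
  have d3: "(dist (\<gamma> x) (\<gamma> z))^2 = (z-x)^2" using ug_iso[OF g x z] by (simp add: power2_abs power2_commute)
  have "(dist (\<gamma> ((x+z)/2)) w)^2 \<le> (1/2)*(\<bar>z-x\<bar>/2)^2 + (1/2)*(\<bar>z-x\<bar>/2)^2 - (1/4)*(z-x)^2"
    using w[rule_format, of "\<gamma> ((x+z)/2)"] d1 d2 d3 by simp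
  also have "\<dots> = 0" by (simp add: power_divide power2_abs)
  finally have "w = \<gamma> ((x+z)/2)" by simp
  thus ?thesis using w[rule_format, of y] d3 by (simp add: dist_commute)
qed

lemma midconv:
  fixes g :: "real \<Rightarrow> real"
  assumes c: "continuous_on {u..v} g" and uv: "u \<le> v"
    and mc: "\<And>x z. x \<in> {u..v} \<Longrightarrow> z \<in> {u..v} \<Longrightarrow> g ((x+z)/2) \<le> (g x + g z)/2"
    and gu: "g u \<le> 0" and gv: "g v \<le> 0" and t: "t \<in> {u..v}"
  shows "g t \<le> 0"
proof (rule ccontr)
  assume "\<not> g t \<le> 0"
  hence gt: "g t > 0" by simp
  obtain x0 where x0: "x0 \<in> {u..v}" "\<And>y. y \<in> {u..v} \<Longrightarrow> g y \<le> g x0"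
    using continuous_attains_sup[OF compact_Icc _ c] uv by auto
  define M where "M = g x0"
  have M0: "M > 0" using x0(2)[OF t] gt M_def by simp
  define S where "S = {x \<in> {u..v}. g x = M}"
  have Sc: "closed S" unfolding S_def by (rule continuous_closed_preimage_constant[OF c]) simp
  have Sne: "S \<noteq> {}" using x0 M_def S_def by auto
  have Sb: "bdd_below S" unfolding S_def by (rule bdd_belowI[of _ u]) auto
  define t0 where "t0 = Inf S"
  have t0S: "t0 \<in> S" unfolding t0_def by (rule closed_contains_Inf[OF Sne Sb Sc])
  hence t0: "t0 \<in> {u..v}" "g t0 = M" by (auto simp: S_def)
  have "t0 \<noteq> u" "t0 \<noteq> v" using t0 gu gv M0 by auto
  hence ut0: "u < t0" "t0 < v" using t0 by auto
  define d where "d = min (t0 - u) (v - t0)"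
  have d0: "d > 0" using ut0 d_def by simp
  have a: "t0 - d \<in> {u..v}" "t0 + d \<in> {u..v}" using ut0 d_def by auto
  have "g (((t0 - d) + (t0 + d))/2) \<le> (g (t0 - d) + g (t0 + d))/2" by (rule mc[OF a])
  hence mid: "g t0 \<le> (g (t0 - d) + g (t0 + d))/2" by simp
  have b: "g (t0 + d) \<le> M" using x0(2)[OF a(2)] M_def by simp
  have "g (t0 - d) \<noteq> M"
  proof
    assume "g (t0 - d) = M"
    hence "t0 - d \<in> S" using a S_def by auto
    hence "t0 \<le> t0 - d" unfolding t0_def by (rule cInf_lower[OF _ Sb])
    thus False using d0 by simp
  qed
  moreover have "g (t0 - d) \<le> M" using x0(2)[OF a(1)] M_def by simp
  ultimately have "g (t0 - d) < M" by simp
  thus False using mid b t0(2) by simp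
qed


lemma affine_eq:
  fixes u v A B s :: real
  assumes "u < v"
  shows "((v-s)*A + (s-u)*B)/(v-u) = A + (s-u)*((B-A)/(v-u))"
proof -
  have n: "v - u \<noteq> 0" using assms by simp
  have "(v-s)*A + (s-u)*B = (v-u)*A + (s-u)*(B-A)" by (simp add: algebra_simps)
  hence "((v-s)*A + (s-u)*B)/(v-u) = ((v-u)*A + (s-u)*(B-A))/(v-u)" by simp
  also have "\<dots> = A + (s-u)*(B-A)/(v-u)" using n by (simp add: add_divide_distrib)
  finally show ?thesis by simp
qed

lemma affine_mid:
  fixes u A x z c :: real
  shows "A + ((x+z)/2-u)*c = ((A + (x-u)*c) + (A + (z-u)*c))/2"
  by (simp add: field_simps)

lemma mc_alg:
  fixes hm hx hz D lm lx lz m2 x2 z2 :: real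
  shows "hm \<le> 1/2*hx + 1/2*hz - 1/4*D \<Longrightarrow> lm = (lx+lz)/2 \<Longrightarrow> m2 = (x2+z2)/2 - 1/4*D \<Longrightarrow>
    hm - m2 - lm \<le> (hx - x2 - lx + (hz - z2 - lz))/2"
  by (simp add: field_simps)

lemma sq_mid:
  fixes x z :: real
  shows "((x+z)/2)^2 = (x^2 + z^2)/2 - (1/4)*(z-x)^2"
  by (simp add: power2_eq_square field_simps)

lemma comp_ident:
  fixes u v t A B :: real
  assumes "u < v"
  shows "t^2 + ((v-t)*(A - u^2) + (t-u)*(B - v^2))/(v-u) = ((v-t)*A + (t-u)*B)/(v-u) - (t-u)*(v-t)"
proof -
  have n: "v - u \<noteq> 0" using assms by simp
  have "t^2 * (v-u) + ((v-t)*(A - u^2) + (t-u)*(B - v^2)) = ((v-t)*A + (t-u)*B) - (t-u)*(v-t)*(v-u)"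
    by (simp add: power2_eq_square algebra_simps)
  hence "(t^2 * (v-u) + ((v-t)*(A - u^2) + (t-u)*(B - v^2)))/(v-u) = (((v-t)*A + (t-u)*B) - (t-u)*(v-t)*(v-u))/(v-u)"
    by simp
  thus ?thesis using n by (simp add: add_divide_distrib diff_divide_distrib)
qed
lemma comp:
  assumes H: "hadamard TYPE('a::complete_space)"
  assumes g: "unit_geodesic p (q::'a) \<gamma>" and uv: "0 \<le> u" "u < v" "v \<le> dist p q"
    and t: "u \<le> t" "t \<le> v"
  shows "(dist y (\<gamma> t))^2 \<le> ((v-t)*(dist y (\<gamma> u))^2 + (t-u)*(dist y (\<gamma> v))^2)/(v-u) - (t-u)*(v-t)"
proof -
  define h where "h s = (dist y (\<gamma> s))^2" for s
  define l where "l s = ((v-s)*(h u - u^2) + (s-u)*(h v - v^2))/(v-u)" for s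
  define G where "G s = h s - s^2 - l s" for s
  have cg: "continuous_on {u..v} \<gamma>" by (rule continuous_on_subset[OF ug_cont[OF g]]) (use uv in auto)
  have ch: "continuous_on {u..v} h" unfolding h_def by (intro continuous_intros cg)
  have cG: "continuous_on {u..v} G" unfolding G_def l_def by (intro continuous_intros ch) (use uv in auto)
  have mc: "G ((x+z)/2) \<le> (G x + G z)/2" if x: "x \<in> {u..v}" and z: "z \<in> {u..v}" for x z
  proof -
    have x': "x \<in> {0..dist p q}" and z': "z \<in> {0..dist p q}" using x z uv by auto
    have "h ((x+z)/2) \<le> (1/2)*h x + (1/2)*h z - (1/4)*(z-x)^2"
      unfolding h_def by (rule ug_mid[OF H g x' z'])
    moreover have "l ((x+z)/2) = (l x + l z)/2" unfolding l_def affine_eq[OF uv(2)] by (rule affine_mid)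
    moreover have "((x+z)/2)^2 = (x^2 + z^2)/2 - (1/4)*(z-x)^2" by (rule sq_mid)
    ultimately show ?thesis unfolding G_def by (rule mc_alg)
  qed
  have Gu: "G u \<le> 0" unfolding G_def l_def using uv by simp
  have Gv: "G v \<le> 0" unfolding G_def l_def using uv by simp
  have "G t \<le> 0" by (rule midconv[OF cG _ mc Gu Gv]) (use uv t in auto)
  hence "h t \<le> t^2 + l t" unfolding G_def by simp
  also have "\<dots> = ((v-t)*h u + (t-u)*h v)/(v-u) - (t-u)*(v-t)" unfolding l_def by (rule comp_ident[OF uv(2)])
  finally show ?thesis unfolding h_def .
qed

lemma fconv_alg2:
  fixes k w a b f :: real
  assumes k: "0 \<le> k" and w: "0 \<le> w" and D: "0 < k + w" and ab: "0 \<le> a" "0 \<le> b"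
    and d: "\<bar>a - b\<bar> \<le> k + w" and f: "0 \<le> f"
    and h: "f^2 \<le> (k*a^2 + w*b^2)/(k+w) - w*k"
  shows "f \<le> (k*a + w*b)/(k+w)"
proof -
  define D where "D = k + w"
  have D0: "D > 0" using D D_def by simp
  have "f^2 * D \<le> ((k*a^2 + w*b^2)/D - w*k) * D" using h D0 unfolding D_def by (intro mult_right_mono) auto
  also have "\<dots> = k*a^2 + w*b^2 - w*k*D" using D0 by (simp add: field_simps)
  finally have h1: "f^2 * D \<le> k*a^2 + w*b^2 - w*k*D" .
  have id: "D*(k*a^2 + w*b^2) - (D^2)*(w*k) - (k*a + w*b)^2 = k*w*((a-b)^2 - D^2)"
    unfolding D_def by (simp add: power2_eq_square algebra_simps)
  have "(a-b)^2 \<le> D^2" using d D0 unfolding D_def by (metis abs_le_square_iff abs_of_pos)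
  hence "k*w*((a-b)^2 - D^2) \<le> 0" using k w by (intro mult_nonneg_nonpos) auto
  hence i2: "D*(k*a^2 + w*b^2) - (D^2)*(w*k) \<le> (k*a + w*b)^2" using id by linarith
  have "(f*D)^2 = D * (f^2 * D)" by (simp add: power2_eq_square)
  also have "\<dots> \<le> D * (k*a^2 + w*b^2 - w*k*D)" using h1 D0 by (intro mult_left_mono) auto
  also have "\<dots> = D*(k*a^2 + w*b^2) - (D^2)*(w*k)" by (simp add: power2_eq_square algebra_simps)
  also have "\<dots> \<le> (k*a + w*b)^2" by (rule i2)
  finally have "(f*D)^2 \<le> (k*a + w*b)^2" .
  hence "f*D \<le> k*a + w*b" by (rule power2_le_imp_le) (use k w ab in simp)
  thus ?thesis using D0 unfolding D_def by (simp add: le_divide_eq)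
qed
lemma fconv:
  assumes H: "hadamard TYPE('a::complete_space)"
  assumes g: "unit_geodesic p (q::'a) \<gamma>" and uv: "0 \<le> u" "u < v" "v \<le> dist p q"
    and t: "u \<le> t" "t \<le> v"
  shows "dist y (\<gamma> t) \<le> ((v-t)*dist y (\<gamma> u) + (t-u)*dist y (\<gamma> v))/(v-u)"
proof -
  have e: "v - t + (t - u) = v - u" by simp
  have "dist y (\<gamma> u) \<le> dist y (\<gamma> v) + dist (\<gamma> v) (\<gamma> u)"
       "dist y (\<gamma> v) \<le> dist y (\<gamma> u) + dist (\<gamma> u) (\<gamma> v)" by (rule dist_triangle)+
  moreover have "dist (\<gamma> u) (\<gamma> v) = v - u" using ug_iso[OF g, of u v] uv by simp
  ultimately have d: "\<bar>dist y (\<gamma> u) - dist y (\<gamma> v)\<bar> \<le> (v - t) + (t - u)"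
    by (simp add: dist_commute abs_le_iff)
  show ?thesis
    using fconv_alg2[of "v-t" "t-u" "dist y (\<gamma> u)" "dist y (\<gamma> v)" "dist y (\<gamma> t)"]
      d comp[OF H g uv t, of y] uv t unfolding e by simp
qed


lemma lin3: "(F::real) \<le> B + Y \<Longrightarrow> Z = -Y \<Longrightarrow> Z \<le> B - F" by linarith

lemma slope_alg:
  fixes s s' F A B :: real
  assumes "0 < s" "s \<le> s'" "F \<le> ((s'-s)*A + s*B)/s'"
  shows "(F - A)/s \<le> (B - A)/s'"
proof -
  have s': "s' > 0" using assms by simp
  have "((s'-s)*A + s*B)/s' = A + s*((B-A)/s')" using s' by (simp add: field_simps)
  hence "F - A \<le> s*((B-A)/s')" using assms by simp
  thus ?thesis using assms(1) by (simp add: pos_divide_le_eq mult.commute)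
qed

lemma slope_alg_left:
  fixes s s' L F A B :: real
  assumes "s \<le> s'" "s' < L" "F \<le> ((L-s')*A + (s'-s)*B)/(L-s)"
  shows "(A - B)/(s - L) \<le> (F - B)/(s' - L)"
proof -
  have p: "L - s > 0" "L - s' > 0" using assms by auto
  have "((L-s')*A + (s'-s)*B)/(L-s) = B + (L-s')*((A-B)/(L-s))" using p by (simp add: field_simps)
  hence "F \<le> B + (L-s')*((A-B)/(L-s))" using assms by simp
  moreover have "(L-s')*((B-A)/(L-s)) = -((L-s')*((A-B)/(L-s)))"
  proof -
    have "B - A = -(A - B)" by simp
    hence "(B-A)/(L-s) = -((A-B)/(L-s))" by (simp only: minus_divide_left)
    thus ?thesis by simp
  qed
  ultimately have le: "(L-s')*((B-A)/(L-s)) \<le> B - F" by (rule lin3)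
  have eq: "((B-A)/(L-s))*(L-s') = (L-s')*((B-A)/(L-s))" by (rule mult.commute)
  have "((B-A)/(L-s))*(L-s') \<le> B - F" by (subst eq) (rule le)
  hence 1: "(B-A)/(L-s) \<le> (B-F)/(L-s')" by (subst pos_le_divide_eq[OF p(2)])
  have 2: "(A - B)/(s - L) = (B-A)/(L-s)"
  proof -
    have "A - B = -(B - A)" "s - L = -(L - s)" by simp_all
    thus ?thesis by (simp only: minus_divide_divide)
  qed
  have 3: "(F - B)/(s' - L) = (B-F)/(L-s')"
  proof -
    have "F - B = -(B - F)" "s' - L = -(L - s')" by simp_all
    thus ?thesis by (simp only: minus_divide_divide)
  qed
  show ?thesis using 1 unfolding 2 3 .
qed

lemma mono_tendsto_right:
  fixes \<phi> :: "real \<Rightarrow> real"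
  assumes L: "0 < L" and mono: "\<And>s s'. 0 < s \<Longrightarrow> s \<le> s' \<Longrightarrow> s' \<le> L \<Longrightarrow> \<phi> s \<le> \<phi> s'"
    and bnd: "\<And>s. s \<in> {0<..L} \<Longrightarrow> B \<le> \<phi> s"
  shows "(\<phi> \<longlongrightarrow> Inf (\<phi> ` {0<..L})) (at_right 0)"
proof (rule order_tendstoI)
  have ne: "\<phi> ` {0<..L} \<noteq> {}" using L by auto
  have bb: "bdd_below (\<phi> ` {0<..L})" using bnd by (intro bdd_belowI[of _ B]) auto
  fix a assume a: "a < Inf (\<phi> ` {0<..L})"
  show "\<forall>\<^sub>F x in at_right 0. a < \<phi> x"
  proof (rule eventually_mono)
    show "\<forall>\<^sub>F x in at_right 0. x \<in> {0<..<L}" using L by (intro eventually_at_right_real) auto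
    fix x assume "x \<in> {0<..<L}"
    hence "Inf (\<phi> ` {0<..L}) \<le> \<phi> x" by (intro cInf_lower[OF _ bb]) auto
    thus "a < \<phi> x" using a by simp
  qed
next
  have ne: "\<phi> ` {0<..L} \<noteq> {}" using L by auto
  have bb: "bdd_below (\<phi> ` {0<..L})" using bnd by (intro bdd_belowI[of _ B]) auto
  fix a assume a: "Inf (\<phi> ` {0<..L}) < a"
  then obtain s0 where s0: "s0 \<in> {0<..L}" "\<phi> s0 < a"
    using cInf_less_iff[OF ne bb] by auto
  show "\<forall>\<^sub>F x in at_right 0. \<phi> x < a"
  proof (rule eventually_mono)
    show "\<forall>\<^sub>F x in at_right 0. x \<in> {0<..<s0}" using s0 by (intro eventually_at_right_real) auto
    fix x assume "x \<in> {0<..<s0}"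
    hence "\<phi> x \<le> \<phi> s0" using s0 by (intro mono) auto
    thus "\<phi> x < a" using s0 by simp
  qed
qed

lemma mono_tendsto_left:
  fixes \<phi> :: "real \<Rightarrow> real"
  assumes L: "0 < L" and mono: "\<And>s s'. 0 \<le> s \<Longrightarrow> s \<le> s' \<Longrightarrow> s' < L \<Longrightarrow> \<phi> s \<le> \<phi> s'"
    and bnd: "\<And>s. s \<in> {0..<L} \<Longrightarrow> \<phi> s \<le> B"
  shows "(\<phi> \<longlongrightarrow> Sup (\<phi> ` {0..<L})) (at_left L)"
proof (rule order_tendstoI)
  have ne: "\<phi> ` {0..<L} \<noteq> {}" using L by auto
  have bb: "bdd_above (\<phi> ` {0..<L})" using bnd by (intro bdd_aboveI[of _ B]) auto
  fix a assume a: "Sup (\<phi> ` {0..<L}) < a"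
  show "\<forall>\<^sub>F x in at_left L. \<phi> x < a"
  proof (rule eventually_mono)
    show "\<forall>\<^sub>F x in at_left L. x \<in> {0<..<L}" using L by (intro eventually_at_left_real) auto
    fix x assume "x \<in> {0<..<L}"
    hence "\<phi> x \<le> Sup (\<phi> ` {0..<L})" by (intro cSup_upper[OF _ bb]) auto
    thus "\<phi> x < a" using a by simp
  qed
next
  have ne: "\<phi> ` {0..<L} \<noteq> {}" using L by auto
  have bb: "bdd_above (\<phi> ` {0..<L})" using bnd by (intro bdd_aboveI[of _ B]) auto
  fix a assume a: "a < Sup (\<phi> ` {0..<L})"
  then obtain s0 where s0: "s0 \<in> {0..<L}" "a < \<phi> s0"
    using less_cSup_iff[OF ne bb] by auto
  show "\<forall>\<^sub>F x in at_left L. a < \<phi> x"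
  proof (rule eventually_mono)
    show "\<forall>\<^sub>F x in at_left L. x \<in> {s0<..<L}" using s0 by (intro eventually_at_left_real) auto
    fix x assume "x \<in> {s0<..<L}"
    hence "\<phi> s0 \<le> \<phi> x" using s0 by (intro mono) auto
    thus "a < \<phi> x" using s0 by simp
  qed
qed


lemma ug_lip:
  assumes g: "unit_geodesic p q \<gamma>" and "s \<in> {0..dist p q}" "t \<in> {0..dist p q}"
  shows "\<bar>dist y (\<gamma> s) - dist y (\<gamma> t)\<bar> \<le> \<bar>s - t\<bar>"
proof -
  have "dist y (\<gamma> s) \<le> dist y (\<gamma> t) + dist (\<gamma> t) (\<gamma> s)"
       "dist y (\<gamma> t) \<le> dist y (\<gamma> s) + dist (\<gamma> s) (\<gamma> t)" by (rule dist_triangle)+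
  moreover have "dist (\<gamma> s) (\<gamma> t) = \<bar>s - t\<bar>" by (rule ug_iso[OF assms])
  ultimately show ?thesis by (simp add: dist_commute abs_le_iff)
qed

lemma rderiv:
  fixes y :: "'a::complete_space"
  assumes H: "hadamard TYPE('a)"
  assumes g: "unit_geodesic p (q::'a) \<gamma>" and L: "0 < dist p q"
  defines "\<phi> \<equiv> \<lambda>s. (dist y (\<gamma> s) - dist y (\<gamma> 0))/s"
  shows "right_deriv (\<lambda>s. dist y (\<gamma> s)) 0 = Inf (\<phi> ` {0<..dist p q})"
    and "(\<phi> \<longlongrightarrow> Inf (\<phi> ` {0<..dist p q})) (at_right 0)"
    and "\<And>s. s \<in> {0<..dist p q} \<Longrightarrow> Inf (\<phi> ` {0<..dist p q}) \<le> \<phi> s"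
proof -
  have mono: "\<phi> s \<le> \<phi> s'" if "0 < s" "s \<le> s'" "s' \<le> dist p q" for s s'
  proof -
    have "dist y (\<gamma> s) \<le> ((s'-s)*dist y (\<gamma> 0) + (s-0)*dist y (\<gamma> s'))/(s'-0)"
      by (rule fconv[OF H g]) (use that in auto)
    thus ?thesis unfolding \<phi>_def by (intro slope_alg) (use that in auto)
  qed
  have bnd: "-1 \<le> \<phi> s" if "s \<in> {0<..dist p q}" for s
  proof -
    have "\<bar>dist y (\<gamma> s) - dist y (\<gamma> 0)\<bar> \<le> \<bar>s - 0\<bar>" by (rule ug_lip[OF g]) (use that in auto)
    hence "-s \<le> dist y (\<gamma> s) - dist y (\<gamma> 0)" using that by simp
    thus ?thesis unfolding \<phi>_def using that by (simp add: le_divide_eq)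
  qed
  show T: "(\<phi> \<longlongrightarrow> Inf (\<phi> ` {0<..dist p q})) (at_right 0)"
    by (rule mono_tendsto_right[OF L mono bnd]) auto
  have "(\<lambda>s. (dist y (\<gamma> s) - dist y (\<gamma> 0))/(s - 0)) = \<phi>" unfolding \<phi>_def by simp
  thus "right_deriv (\<lambda>s. dist y (\<gamma> s)) 0 = Inf (\<phi> ` {0<..dist p q})"
    unfolding right_deriv_def using T by (simp add: tendsto_Lim)
  show "\<And>s. s \<in> {0<..dist p q} \<Longrightarrow> Inf (\<phi> ` {0<..dist p q}) \<le> \<phi> s"
    by (rule cInf_lower) (use bnd in \<open>auto intro!: bdd_belowI[of _ "-1"]\<close>)
qed

lemma lderiv:
  fixes y :: "'a::complete_space"
  assumes H: "hadamard TYPE('a)"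
  assumes g: "unit_geodesic p (q::'a) \<gamma>" and L: "0 < dist p q"
  defines "\<psi> \<equiv> \<lambda>s. (dist y (\<gamma> s) - dist y (\<gamma> (dist p q)))/(s - dist p q)"
  shows "left_deriv (\<lambda>s. dist y (\<gamma> s)) (dist p q) = Sup (\<psi> ` {0..<dist p q})"
    and "\<And>s. s \<in> {0..<dist p q} \<Longrightarrow> \<psi> s \<le> Sup (\<psi> ` {0..<dist p q})"
proof -
  define L where "L = dist p q"
  have mono: "\<psi> s \<le> \<psi> s'" if "0 \<le> s" "s \<le> s'" "s' < L" for s s'
  proof -
    have "dist y (\<gamma> s') \<le> ((L-s')*dist y (\<gamma> s) + (s'-s)*dist y (\<gamma> L))/(L-s)"
      by (rule fconv[OF H g]) (use that L_def in auto)
    thus ?thesis unfolding \<psi>_def L_def[symmetric] by (rule slope_alg_left[OF that(2,3)])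
  qed
  have bnd: "\<psi> s \<le> 1" if "s \<in> {0..<L}" for s
  proof -
    have "\<bar>dist y (\<gamma> s) - dist y (\<gamma> L)\<bar> \<le> \<bar>s - L\<bar>" by (rule ug_lip[OF g]) (use that L_def in auto)
    hence "1 * (s - L) \<le> dist y (\<gamma> s) - dist y (\<gamma> L)" using that by simp
    moreover have "s - L < 0" using that by simp
    ultimately show ?thesis unfolding \<psi>_def L_def[symmetric] by (simp add: neg_divide_le_eq)
  qed
  have T: "(\<psi> \<longlongrightarrow> Sup (\<psi> ` {0..<L})) (at_left L)"
    by (rule mono_tendsto_left[OF L[folded L_def] mono bnd]) auto
  thus "left_deriv (\<lambda>s. dist y (\<gamma> s)) (dist p q) = Sup (\<psi> ` {0..<dist p q})"
    unfolding left_deriv_def L_def[symmetric] \<psi>_def by (simp add: tendsto_Lim)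
  show "\<And>s. s \<in> {0..<dist p q} \<Longrightarrow> \<psi> s \<le> Sup (\<psi> ` {0..<dist p q})"
    by (rule cSup_upper) (use bnd L_def in \<open>auto intro!: bdd_aboveI[of _ 1]\<close>)
qed

lemma right_alg:
  fixes a b L t F :: real
  assumes a: "0 < a" and L: "0 < L" and b: "0 \<le> b" and ab: "\<bar>a - b\<bar> \<le> L" "L \<le> a + b"
    and t: "0 < t" "t < a" and F: "0 \<le> F" and h: "F^2 \<le> ((L-t)*a^2 + t*b^2)/L - t*(L-t)"
  shows "(F - a)/t \<le> (b^2-a^2-L^2)/(2*a*L) + t/(2*a)"
proof -
  define ub where "ub = (b^2-a^2-L^2)/(2*a*L)"
  have X: "((L-t)*a^2 + t*b^2)/L - t*(L-t) = a^2 + 2*a*t*ub + t^2"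
    unfolding ub_def using a L by (simp add: field_simps power2_eq_square)
  have "\<bar>a - L\<bar> \<le> b" using ab by linarith
  hence "\<bar>a-L\<bar> \<le> \<bar>b\<bar>" using b by simp
  hence "(a-L)^2 \<le> b^2" by (simp only: abs_le_square_iff)
  hence "-(2*a*L) \<le> b^2-a^2-L^2" by (simp add: power2_eq_square algebra_simps)
  hence ub1: "-1 \<le> ub" unfolding ub_def using a L by (simp add: le_divide_eq)
  define Y where "Y = t*ub + t^2/(2*a)"
  have "-t \<le> t*ub" using ub1 t mult_left_mono[of "-1" ub t] by simp
  moreover have "0 \<le> t^2/(2*a)" using a by simp
  ultimately have aY: "0 \<le> a + Y" unfolding Y_def using t by linarith
  have "(a+Y)^2 = a^2 + 2*a*t*ub + t^2 + Y^2" unfolding Y_def using a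
    by (simp add: power2_eq_square field_simps)
  hence "F^2 \<le> (a+Y)^2" using h X zero_le_power2[of Y] by linarith
  hence "F \<le> a + Y" using aY by (rule power2_le_imp_le)
  hence "F - a \<le> t * (ub + t/(2*a))" unfolding Y_def by (simp add: power2_eq_square algebra_simps)
  thus ?thesis unfolding ub_def[symmetric] using t by (simp add: pos_divide_le_eq mult.commute)
qed

lemma final_alg:
  fixes a b L u w \<eta> :: real
  assumes a: "0 < a" and b: "0 < b" and L: "0 < L" and ab: "\<bar>a - b\<bar> \<le> L" "L \<le> a + b"
    and e: "0 < \<eta>"
    and u: "u \<le> (b^2-a^2-L^2)/(2*a*L)" and w: "(b^2+L^2-a^2)/(2*b*L) \<le> w"
    and u2: "u^2 \<le> 1 - \<eta>^2" and w2: "w^2 \<le> 1 - \<eta>^2"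
  shows "(1/2)*\<eta>^2*L^2*(1/max a b) \<le> b - a - L*u"
proof -
  define ub where "ub = (b^2-a^2-L^2)/(2*a*L)"
  define wb where "wb = (b^2+L^2-a^2)/(2*b*L)"
  have ubd: "2*a*L*ub = b^2-a^2-L^2" unfolding ub_def using a L by simp
  have wbd: "b*wb = a*ub + L" unfolding wb_def ub_def using a b L by (simp add: field_simps power2_eq_square)
  have "u^2 \<le> 1" using u2 zero_le_power2[of \<eta>] by linarith
  hence "u^2 \<le> 1^2" by simp
  hence "\<bar>u\<bar> \<le> \<bar>1\<bar>" by (simp only: abs_le_square_iff)
  hence um: "-1 \<le> u" by simp
  have ub_ge: "-1 \<le> ub" using um u ub_def by simp
  have "b^2 \<le> (a+L)^2" using ab b by (intro power_mono) auto
  hence "b^2-a^2-L^2 \<le> 2*a*L" by (simp add: power2_eq_square algebra_simps)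
  hence ub_le: "ub \<le> 1" unfolding ub_def using a L by (simp add: divide_le_eq)
  have "\<bar>(a - b)*ub\<bar> \<le> L * 1" unfolding abs_mult using ab ub_ge ub_le by (intro mult_mono) auto
  hence "0 \<le> L + (a-b)*ub" by linarith
  hence "0 \<le> b*(wb - ub)" using wbd by (simp add: algebra_simps)
  hence ubwb: "ub \<le> wb" using b by (simp add: zero_le_mult_iff)
  have ub2: "ub^2 \<le> 1 - \<eta>^2"
  proof (cases "0 \<le> ub")
    case True
    have "ub \<le> w" using ubwb w unfolding wb_def by simp
    hence "ub^2 \<le> w^2" using True by (intro power_mono) auto
    thus ?thesis using w2 by simp
  next
    case False
    hence "(-ub)^2 \<le> (-u)^2" using u ub_def by (intro power_mono) auto
    thus ?thesis using u2 by simp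
  qed
  define Db where "Db = b - a - L*ub"
  have prod: "Db * (b + a + L*ub) = L^2*(1 - ub^2)"
  proof -
    have "Db * (b + a + L*ub) = b^2 - (a + L*ub)^2" unfolding Db_def by (simp add: power2_eq_square algebra_simps)
    also have "\<dots> = b^2 - a^2 - 2*a*L*ub - L^2*ub^2" by (simp add: power2_eq_square algebra_simps)
    also have "\<dots> = L^2*(1 - ub^2)" using ubd by (simp add: algebra_simps)
    finally show ?thesis .
  qed
  have "0 < \<eta>^2" using e by simp
  hence "0 < 1 - ub^2" using ub2 by linarith
  hence pos: "0 < L^2*(1 - ub^2)" using L by simp
  have "(a + L*ub)^2 \<le> b^2" using prod pos unfolding Db_def
    by (simp add: power2_eq_square algebra_simps)
  hence "\<bar>a + L*ub\<bar> \<le> \<bar>b\<bar>" by (simp only: abs_le_square_iff)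
  hence "a + L*ub \<le> b" using b by simp
  hence Db0: "0 \<le> Db" unfolding Db_def by simp
  have S0: "0 < b + a + L*ub"
  proof (rule ccontr)
    assume "\<not> 0 < b + a + L*ub"
    hence "Db * (b + a + L*ub) \<le> 0" using Db0 by (intro mult_nonneg_nonpos) auto
    thus False using prod pos by simp
  qed
  have S1: "b + a + L*ub \<le> 2 * max a b" using \<open>a + L*ub \<le> b\<close> by simp
  have "L^2*\<eta>^2 \<le> L^2*(1 - ub^2)" using ub2 by (intro mult_left_mono) auto
  also have "\<dots> = Db * (b + a + L*ub)" using prod by simp
  also have "\<dots> \<le> Db * (2 * max a b)" using Db0 S1 by (intro mult_left_mono) auto
  finally have "L^2*\<eta>^2 \<le> Db * (2 * max a b)" .
  hence "(1/2)*\<eta>^2*L^2*(1/max a b) \<le> Db" using a b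
    by (simp add: field_simps max_def split: if_splits)
  moreover have "Db \<le> b - a - L*u" unfolding Db_def using u L unfolding ub_def[symmetric]
    by (simp add: mult_left_mono)
  ultimately show ?thesis by simp
qed

lemma eps_le:
  fixes x y c k :: real
  assumes h: "\<And>t. 0 < t \<Longrightarrow> t < c \<Longrightarrow> x \<le> y + t*k" and c: "0 < c" and k: "0 \<le> k"
  shows "x \<le> y"
proof (rule field_le_epsilon)
  fix e :: real assume e: "0 < e"
  define t where "t = min (c/2) (e/(k+1))"
  have t: "0 < t" "t < c" using c e k by (auto simp: t_def)
  have "t*k \<le> (e/(k+1))*k" using k by (intro mult_right_mono) (auto simp: t_def)
  also have "\<dots> \<le> e" using e k by (simp add: field_simps)
  finally show "x \<le> y + e" using h[OF t] by linarith
qed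

lemma pointwise:
  fixes y m q :: "'a::complete_space"
  assumes H: "hadamard TYPE('a)" and mq: "m \<noteq> q" and e: "0 < \<eta>"
  shows "dist m q * right_deriv (dist_along m q y) 0
     + (1/2)*\<eta>^2*(dist m q)^2*((1/max (dist y m) (dist y q)) * indicator (bowtie_compl m q \<eta>) y)
     \<le> dist y q - dist y m"
proof -
  define L where "L = dist m q"
  define \<gamma> where "\<gamma> = geod m q"
  have g: "unit_geodesic m q \<gamma>" unfolding \<gamma>_def by (rule geod_unit[OF H])
  have L0: "0 < L" using mq L_def by simp
  have g0: "\<gamma> 0 = m" "\<gamma> L = q" using g unfolding unit_geodesic_def L_def by auto
  have da: "dist_along m q y = (\<lambda>s. dist y (\<gamma> s))" unfolding dist_along_def \<gamma>_def by simp
  define a where "a = dist y m"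
  define b where "b = dist y q"
  define \<phi> where "\<phi> = (\<lambda>s. (dist y (\<gamma> s) - dist y (\<gamma> 0))/s)"
  define \<psi> where "\<psi> = (\<lambda>s. (dist y (\<gamma> s) - dist y (\<gamma> (dist m q)))/(s - dist m q))"
  define u where "u = right_deriv (dist_along m q y) 0"
  define w where "w = left_deriv (dist_along m q y) (dist q m)"
  have uI: "u = Inf (\<phi> ` {0<..L})" unfolding u_def da \<phi>_def L_def
    by (rule rderiv(1)[OF H g]) (use L0 L_def in simp)
  have uphi: "u \<le> \<phi> s" if "s \<in> {0<..L}" for s
    unfolding uI \<phi>_def using rderiv(3)[OF H g, of s y] L0 that L_def by simp
  have wS: "w = Sup (\<psi> ` {0..<L})" unfolding w_def da \<psi>_def L_def dist_commute[of q m]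
    by (rule lderiv(1)[OF H g]) (use L0 L_def in simp)
  have wpsi: "\<psi> s \<le> w" if "s \<in> {0..<L}" for s
    unfolding wS \<psi>_def using lderiv(2)[OF H g, of s y] L0 that L_def by simp
  have base: "L * u \<le> b - a"
  proof -
    have "u \<le> (b - a)/L" using uphi[of L] L0 g0 unfolding \<phi>_def a_def b_def by simp
    thus ?thesis using L0 by (simp add: le_divide_eq mult.commute)
  qed
  have tri: "\<bar>a - b\<bar> \<le> L" "L \<le> a + b"
  proof -
    have "dist y m \<le> dist y q + dist q m" "dist y q \<le> dist y m + dist m q" "dist m q \<le> dist m y + dist y q"
      by (rule dist_triangle)+
    thus "\<bar>a - b\<bar> \<le> L" "L \<le> a + b" unfolding a_def b_def L_def by (auto simp: dist_commute)
  qed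
  show ?thesis
  proof (cases "y \<in> bowtie_compl m q \<eta>")
    case False
    thus ?thesis using base unfolding u_def L_def a_def b_def by simp
  next
    case True
    hence A: "u^2 \<le> 1 - \<eta>^2" "w^2 \<le> 1 - \<eta>^2" unfolding bowtie_compl_def u_def w_def by auto
    have e2: "0 < \<eta>^2" using e by simp
    have a0: "0 < a"
    proof (rule ccontr)
      assume "\<not> 0 < a"
      hence "y = m" unfolding a_def by simp
      have "\<phi> s = 1" if "s \<in> {0<..L}" for s
      proof -
        have "dist m (\<gamma> s) = s" using ug_dist(1)[OF g, of s] that L_def by simp
        thus ?thesis unfolding \<phi>_def using \<open>y = m\<close> g0 that by simp
      qed
      hence "\<phi> ` {0<..L} = (\<lambda>s. 1) ` {0<..L}" by (intro image_cong) auto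
      also have "\<dots> = {1}" using L0 by (simp add: image_constant_conv)
      finally have "\<phi> ` {0<..L} = {1}" .
      hence "u = 1" using uI by simp
      thus False using A e2 by simp
    qed
    have b0: "0 < b"
    proof (rule ccontr)
      assume "\<not> 0 < b"
      hence "y = q" unfolding b_def by simp
      have "\<psi> s = -1" if "s \<in> {0..<L}" for s
      proof -
        have "dist q (\<gamma> s) = L - s" using ug_dist(2)[OF g, of s] that L_def by (simp add: dist_commute)
        moreover have "(L - s)/(s - L) = -1"
          by (subst divide_eq_minus_1_iff) (use that in auto)
        ultimately show ?thesis unfolding \<psi>_def L_def[symmetric] using \<open>y = q\<close> g0 by simp
      qed
      hence "\<psi> ` {0..<L} = (\<lambda>s. -1) ` {0..<L}" by (intro image_cong) auto
      also have "\<dots> = {-1}" using L0 by (simp add: image_constant_conv)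
      finally have "\<psi> ` {0..<L} = {-1}" .
      hence "w = -1" using wS by simp
      thus False using A e2 by simp
    qed
    have comp0: "(dist y (\<gamma> t))^2 \<le> ((L-t)*a^2 + t*b^2)/L - t*(L-t)" if "0 \<le> t" "t \<le> L" for t
      using comp[OF H g, of 0 L t y] that L0 g0 unfolding a_def b_def L_def by simp
    have u_le: "u \<le> (b^2-a^2-L^2)/(2*a*L)"
    proof (rule eps_le)
      show "0 < min a L" using a0 L0 by simp
      show "0 \<le> 1/(2*a)" using a0 by simp
      fix t assume t: "0 < t" "t < min a L"
      have "u \<le> \<phi> t" using uphi t by simp
      also have "\<phi> t = (dist y (\<gamma> t) - a)/t" unfolding \<phi>_def a_def g0 ..
      also have "\<dots> \<le> (b^2-a^2-L^2)/(2*a*L) + t/(2*a)"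
        by (rule right_alg[OF a0 L0 _ tri]) (use t b0 comp0[of t] in auto)
      finally show "u \<le> (b^2-a^2-L^2)/(2*a*L) + t*(1/(2*a))" by simp
    qed
    have w_ge: "(b^2+L^2-a^2)/(2*b*L) \<le> w"
    proof -
      have "- w \<le> - ((b^2+L^2-a^2)/(2*b*L))"
      proof (rule eps_le)
        show "0 < min b L" using b0 L0 by simp
        show "0 \<le> 1/(2*b)" using b0 by simp
        fix t assume t: "0 < t" "t < min b L"
        have s: "L - t \<in> {0..<L}" using t by auto
        have c1: "(dist y (\<gamma> (L-t)))^2 \<le> ((L-t)*b^2 + t*a^2)/L - t*(L-t)"
          using comp0[of "L-t"] t by (simp add: algebra_simps)
        have "(dist y (\<gamma> (L-t)) - b)/t \<le> (a^2-b^2-L^2)/(2*b*L) + t/(2*b)"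
          by (rule right_alg[OF b0 L0 _ _ _ t(1)]) (use t a0 tri c1 abs_minus_commute[of a b] in auto)
        moreover have "\<psi> (L-t) = - ((dist y (\<gamma> (L-t)) - b)/t)"
          unfolding \<psi>_def L_def[symmetric] b_def g0 by simp
        moreover have "- ((b^2+L^2-a^2)/(2*b*L)) = (a^2-b^2-L^2)/(2*b*L)"
        proof -
          have "-(b^2+L^2-a^2) = a^2-b^2-L^2" by simp
          thus ?thesis by (simp only: minus_divide_left)
        qed
        ultimately show "- w \<le> - ((b^2+L^2-a^2)/(2*b*L)) + t*(1/(2*b))"
          using wpsi[OF s] by simp
      qed
      thus ?thesis by simp
    qed
    have "(1/2)*\<eta>^2*L^2*(1/max a b) \<le> b - a - L*u"
      by (rule final_alg[OF a0 b0 L0 tri e u_le w_ge A])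
    thus ?thesis using True unfolding u_def[symmetric] L_def[symmetric] a_def[symmetric] b_def[symmetric]
      by simp
  qed
qed


theorem mainTheorem2:
  fixes M :: "'s measure" and Y :: "'s \<Rightarrow> 'a::complete_space"
    and y\<^sub>0 m q :: 'a and \<eta> :: real
  assumes "hadamard TYPE('a)"
    and "prob_space M"
    and "Y \<in> borel_measurable M"
    and "\<forall>x::'a. prob_space.expectation M (\<lambda>\<omega>. dist (Y \<omega>) m - dist (Y \<omega>) y\<^sub>0)
                 \<le> prob_space.expectation M (\<lambda>\<omega>. dist (Y \<omega>) x - dist (Y \<omega>) y\<^sub>0)"
    and "q \<noteq> m"
    and "0 \<le> \<eta>" and "\<eta> \<le> 1"
  shows "prob_space.expectation M (\<lambda>\<omega>. dist (Y \<omega>) q - dist (Y \<omega>) m)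
         \<ge> (1/2) * \<eta>^2 * (dist q m)^2 *
           prob_space.expectation M
             (\<lambda>\<omega>. (1 / max (dist (Y \<omega>) m) (dist (Y \<omega>) q)) * indicator (bowtie_compl m q \<eta>) (Y \<omega>))"
proof -
  note H = assms(1)
  interpret P: prob_space M by (rule assms(2))
  have Ym: "Y \<in> borel_measurable M" by (rule assms(3))
  have dm: "(\<lambda>\<omega>. dist (Y \<omega>) x) \<in> borel_measurable M" for x :: 'a
  proof -
    have "(\<lambda>z. dist z x) \<in> borel_measurable borel"
      by (rule borel_measurable_continuous_onI) (intro continuous_intros)
    from measurable_compose[OF Ym this] show ?thesis by (simp add: o_def)
  qed
  define D where "D x \<omega> = dist (Y \<omega>) x - dist (Y \<omega>) y\<^sub>0" for x \<omega>
  have Dm: "D x \<in> borel_measurable M" for x unfolding D_def using dm by measurable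
  have Di: "integrable M (D x)" for x
  proof (rule P.integrable_const_bound[where B="dist x y\<^sub>0"])
    show "AE \<omega> in M. norm (D x \<omega>) \<le> dist x y\<^sub>0"
    proof (rule AE_I2)
      fix \<omega>
      have "dist (Y \<omega>) x \<le> dist (Y \<omega>) y\<^sub>0 + dist y\<^sub>0 x" "dist (Y \<omega>) y\<^sub>0 \<le> dist (Y \<omega>) x + dist x y\<^sub>0"
        by (rule dist_triangle)+
      thus "norm (D x \<omega>) \<le> dist x y\<^sub>0" unfolding D_def by (simp add: dist_commute abs_le_iff)
    qed
  qed (rule Dm)
  have minE: "integral\<^sup>L M (D m) \<le> integral\<^sup>L M (D x)" for x
    using assms(4) unfolding D_def by blast
  have diffE: "integral\<^sup>L M (\<lambda>\<omega>. dist (Y \<omega>) x - dist (Y \<omega>) z) = integral\<^sup>L M (D x) - integral\<^sup>L M (D z)" for x z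
  proof -
    have "integral\<^sup>L M (\<lambda>\<omega>. dist (Y \<omega>) x - dist (Y \<omega>) z) = integral\<^sup>L M (\<lambda>\<omega>. D x \<omega> - D z \<omega>)"
      unfolding D_def by simp
    also have "\<dots> = integral\<^sup>L M (D x) - integral\<^sup>L M (D z)" by (rule Bochner_Integration.integral_diff[OF Di Di])
    finally show ?thesis .
  qed
  have diffI: "integrable M (\<lambda>\<omega>. dist (Y \<omega>) x - dist (Y \<omega>) z)" for x z
  proof -
    have "integrable M (\<lambda>\<omega>. D x \<omega> - D z \<omega>)" by (rule Bochner_Integration.integrable_diff[OF Di Di])
    thus ?thesis unfolding D_def by simp
  qed
  define LHS where "LHS = integral\<^sup>L M (\<lambda>\<omega>. dist (Y \<omega>) q - dist (Y \<omega>) m)"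
  have LHS0: "0 \<le> LHS" unfolding LHS_def diffE using minE[of q] by simp
  define \<psi> where "\<psi> = (\<lambda>\<omega>. (1 / max (dist (Y \<omega>) m) (dist (Y \<omega>) q)) * indicator (bowtie_compl m q \<eta>) (Y \<omega>))"
  define L where "L = dist m q"
  have Lqm: "dist q m = L" unfolding L_def by (simp add: dist_commute)
  have L0: "0 < L" using assms(5) L_def by simp
  have suff: "(1/2) * \<eta>^2 * (dist q m)^2 * integral\<^sup>L M \<psi> \<le> LHS"
  proof (cases "\<eta> = 0 \<or> \<not> integrable M \<psi>")
    case True
    hence "(1/2) * \<eta>^2 * (dist q m)^2 * integral\<^sup>L M \<psi> = 0"
      using not_integrable_integral_eq[of M \<psi>] by auto
    thus ?thesis using LHS0 by linarith
  next
    case False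
    hence e: "0 < \<eta>" and \<psi>i: "integrable M \<psi>" using assms(6) by auto
    define \<gamma> where "\<gamma> = geod m q"
    have g: "unit_geodesic m q \<gamma>" unfolding \<gamma>_def by (rule geod_unit[OF H])
    have g0: "\<gamma> 0 = m" using g unfolding unit_geodesic_def by auto
    define t where "t n = L / real (Suc n)" for n
    have t0: "0 < t n" "t n \<le> L" for n
    proof -
      show "0 < t n" unfolding t_def using L0 by simp
      have "L / real (Suc n) \<le> L / 1" by (rule divide_left_mono) (use L0 in auto)
      thus "t n \<le> L" unfolding t_def by simp
    qed
    have tlim: "filterlim t (at_right 0) sequentially"
    proof (rule tendsto_imp_filterlim_at_right)
      show "t \<longlonglongrightarrow> 0" unfolding t_def using LIMSEQ_Suc[OF lim_const_over_n[of L]] by simp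
      show "\<forall>\<^sub>F n in sequentially. 0 < t n" using t0 by simp
    qed
    define U where "U \<omega> = right_deriv (dist_along m q (Y \<omega>)) 0" for \<omega>
    define Q where "Q n \<omega> = (dist (Y \<omega>) (\<gamma> (t n)) - dist (Y \<omega>) m) / t n" for n \<omega>
    have da: "dist_along m q y = (\<lambda>s. dist y (\<gamma> s))" for y unfolding dist_along_def \<gamma>_def by simp
    have Qlim: "(\<lambda>n. Q n \<omega>) \<longlonglongrightarrow> U \<omega>" for \<omega>
    proof -
      define \<phi> where "\<phi> = (\<lambda>s. (dist (Y \<omega>) (\<gamma> s) - dist (Y \<omega>) (\<gamma> 0))/s)"
      have Lmq: "0 < dist m q" using L0 L_def by simp
      have T: "(\<phi> \<longlongrightarrow> Inf (\<phi> ` {0<..dist m q})) (at_right 0)" unfolding \<phi>_def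
        by (rule rderiv(2)[OF H g Lmq])
      have U: "U \<omega> = Inf (\<phi> ` {0<..dist m q})" unfolding U_def da \<phi>_def
        by (rule rderiv(1)[OF H g Lmq])
      have "filterlim (\<lambda>n. \<phi> (t n)) (nhds (Inf (\<phi> ` {0<..dist m q}))) sequentially"
        by (rule filterlim_compose[OF T tlim])
      thus ?thesis unfolding U Q_def \<phi>_def g0 .
    qed
    have Qb: "norm (Q n \<omega>) \<le> 1" for n \<omega>
    proof -
      have "\<bar>dist (Y \<omega>) (\<gamma> (t n)) - dist (Y \<omega>) (\<gamma> 0)\<bar> \<le> \<bar>t n - 0\<bar>"
        by (rule ug_lip[OF g]) (use t0[of n] L_def in auto)
      hence X: "\<bar>dist (Y \<omega>) (\<gamma> (t n)) - dist (Y \<omega>) m\<bar> \<le> t n" using t0[of n] g0 by simp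
      have "norm (Q n \<omega>) = \<bar>dist (Y \<omega>) (\<gamma> (t n)) - dist (Y \<omega>) m\<bar> / t n"
        unfolding Q_def using t0[of n] by (simp add: abs_divide)
      also have "\<dots> \<le> 1" using X t0[of n] by (simp add: pos_divide_le_eq)
      finally show ?thesis .
    qed
    have Qm: "Q n \<in> borel_measurable M" for n unfolding Q_def using dm by measurable
    have Um: "U \<in> borel_measurable M" by (rule borel_measurable_LIMSEQ_real[OF Qlim Qm])
    have c1: "integrable M (\<lambda>\<omega>. 1::real)" by simp
    have Ui: "integrable M U"
      by (rule integrable_dominated_convergence[where s=Q, OF Um Qm c1]) (use Qlim Qb in auto)
    have QE: "(\<lambda>n. integral\<^sup>L M (Q n)) \<longlonglongrightarrow> integral\<^sup>L M U"
      by (rule integral_dominated_convergence[where s=Q, OF Um Qm c1]) (use Qlim Qb in auto)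
    have QE0: "0 \<le> integral\<^sup>L M (Q n)" for n
    proof -
      have "integral\<^sup>L M (Q n) = integral\<^sup>L M (\<lambda>\<omega>. (1 / t n) * (dist (Y \<omega>) (\<gamma> (t n)) - dist (Y \<omega>) m))"
        unfolding Q_def by simp
      also have "\<dots> = (1 / t n) * integral\<^sup>L M (\<lambda>\<omega>. dist (Y \<omega>) (\<gamma> (t n)) - dist (Y \<omega>) m)"
        by (rule integral_mult_right_zero)
      also have "\<dots> = (1 / t n) * (integral\<^sup>L M (D (\<gamma> (t n))) - integral\<^sup>L M (D m))"
        unfolding diffE ..
      finally show ?thesis using minE[of "\<gamma> (t n)"] t0[of n] by simp
    qed
    have UE0: "0 \<le> integral\<^sup>L M U"
      by (rule LIMSEQ_le_const[OF QE]) (use QE0 in auto)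
    define c where "c = (1/2) * \<eta>^2 * L^2"
    have pw: "L * U \<omega> + c * \<psi> \<omega> \<le> dist (Y \<omega>) q - dist (Y \<omega>) m" for \<omega>
      using pointwise[OF H assms(5)[symmetric] e, of "Y \<omega>"]
      unfolding U_def c_def \<psi>_def L_def by simp
    have "integral\<^sup>L M (\<lambda>\<omega>. L * U \<omega> + c * \<psi> \<omega>) \<le> LHS"
      unfolding LHS_def
      by (rule Bochner_Integration.integral_mono) (use Ui \<psi>i diffI pw in auto)
    moreover have "integral\<^sup>L M (\<lambda>\<omega>. L * U \<omega> + c * \<psi> \<omega>) = L * integral\<^sup>L M U + c * integral\<^sup>L M \<psi>"
      using Ui \<psi>i by simp
    moreover have "0 \<le> L * integral\<^sup>L M U" using L0 UE0 by simp
    ultimately have "c * integral\<^sup>L M \<psi> \<le> LHS" by linarith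
    thus ?thesis unfolding c_def Lqm .
  qed
  thus ?thesis unfolding LHS_def \<psi>_def .
qed

end
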